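(* Let $P \geq 3$ be an integer and $p = P!/2!$, and let $N$ be the number of positive integers $d$ such that $d(d+1)$ divides $P!$. Then for each such $d$ the three numbers $-p - 2p\left(d + \frac{1}{d}\right)$, $p + 2p\left(d + \frac{1}{d+1}\right)$, $p + 2p\left(\frac{1}{d} + \frac{d}{d+1}\right)$ are integers and $$\left\{-p - 2p\left(d + \frac{1}{d}\right)\right\}^3 + \left\{p + 2p\left(d + \frac{1}{d+1}\right)\right\}^3 + \left\{p + 2p\left(\frac{1}{d} + \frac{d}{d+1}\right)\right\}^3 = 3p^3 = 3\left(\frac{P!}{2!}\right)^3,$$ and the $N$ values of $d$ yield $N$ distinct sets of three cubes representing $3(P!/2!)^3$. Moreover, if $P \geq 5$, then $N \geq P$, so $3(P!/2!)^3$ is represented by at least $P$ distinct sets of three integer cubes. *)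

theory Defs
  imports Complex_Main
begin

end

theory Submission
  imports Defs
begin

lemma prod_dvd_fact: "A \<subseteq> {1..n} \<Longrightarrow> \<Prod>A dvd (fact n :: nat)"
  unfolding fact_prod by (simp add: prod_dvd_prod_subset)

lemma two_dvd_fact: "d \<ge> 1 \<Longrightarrow> d + 1 \<le> n \<Longrightarrow> d * (d + 1) dvd (fact n :: nat)"
proof -
  assume "d \<ge> 1" "d + 1 \<le> n"
  then have "{d, d+1} \<subseteq> {1..n}" by auto
  from prod_dvd_fact[OF this] show ?thesis by simp
qed

lemma four_dvd_fact:
  assumes "k \<ge> 2" "2 * k \<le> n"
  shows "(k*k - 1) * (k*k - 1 + 1) dvd (fact n :: nat)"
proof -
  have "{k-1, k, k+1, 2*k} \<subseteq> {1..n}" using assms by auto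
  moreover have "\<Prod>{k-1, k, k+1, 2*k} = (k-1)*(k*((k+1)*(2*k)))"
  proof -
    have "k-1 \<notin> {k, k+1, 2*k}" "k \<notin> {k+1, 2*k}" "k+1 \<notin> {2*k}" using assms by auto
    then show ?thesis by (subst prod.insert; simp)+
  qed
  ultimately have "(k-1)*(k*((k+1)*(2*k))) dvd fact n"
    using prod_dvd_fact[of "{k-1, k, k+1, 2*k}" n] by simp
  moreover have "(k*k - 1) * (k*k - 1 + 1) dvd (k-1)*(k*((k+1)*(2*k)))"
  proof -
    obtain m where m: "k = Suc m" using assms by (cases k) auto
    have "(k-1)*(k*((k+1)*(2*k))) = ((k*k - 1) * (k*k - 1 + 1)) * 2"
      unfolding m by (simp add: algebra_simps)
    then show ?thesis by (metis dvd_triv_left)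
  qed
  ultimately show ?thesis using dvd_trans by blast
qed

lemma cube_id:
  assumes d: "(d::rat) > 0"
  shows "(- p - 2 * p * (d + 1 / d))^3 + (p + 2 * p * (d + 1 / (d + 1)))^3
     + (p + 2 * p * (1 / d + d / (d + 1)))^3 = 3 * p^3"
proof -
  define e where "e = 1/d"
  define f where "f = 1/(d+1)"
  have e: "d*e = 1" using d by (simp add: e_def)
  have f: "(d+1)*f = 1" using d by (simp add: f_def)
  have "d/(d+1) = d*f" by (simp add: f_def)
  then show ?thesis unfolding e_def[symmetric] f_def[symmetric] using e f by algebra
qed

lemma strict_aux:
  assumes "(a::nat) > 0" "a < b"
  shows "of_nat a + 1 / of_nat a < (of_nat b + 1 / of_nat b :: rat)"
proof -
  have "1 / (of_nat a::rat) \<le> 1" using assms by simp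
  moreover have "1 / (of_nat b::rat) > 0" using assms by simp
  moreover have "(of_nat a::rat) + 1 \<le> of_nat b" using assms by linarith
  ultimately show ?thesis by linarith
qed

theorem lemma3p4:
  fixes P :: nat
  assumes "P \<ge> 3"
  defines "p \<equiv> (fact P :: rat) / fact 2"
  defines "D \<equiv> {d::nat. d > 0 \<and> d * (d + 1) dvd fact P}"
  defines "x \<equiv> \<lambda>d::nat. - p - 2 * p * (of_nat d + 1 / of_nat d)"
  defines "y \<equiv> \<lambda>d::nat. p + 2 * p * (of_nat d + 1 / (of_nat d + 1))"
  defines "z \<equiv> \<lambda>d::nat. p + 2 * p * (1 / of_nat d + of_nat d / (of_nat d + 1))"
  shows "(\<forall>d\<in>D. x d \<in> \<int> \<and> y d \<in> \<int> \<and> z d \<in> \<int> \<and>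
            (x d)^3 + (y d)^3 + (z d)^3 = 3 * p^3)
         \<and> finite D
         \<and> inj_on (\<lambda>d. {(x d)^3, (y d)^3, (z d)^3}) D
         \<and> (P \<ge> 5 \<longrightarrow> card D \<ge> P)"
proof (intro conjI)
  have "1*(1+1) dvd (fact P :: nat)" using two_dvd_fact[of 1 P] assms(1) by simp
  then have "2 dvd (fact P :: nat)" by (simp only: one_add_one mult_1)
  then obtain q where q: "(fact P :: nat) = 2 * q" by blast
  have fq: "(fact P :: rat) = 2 * of_nat q"
    using arg_cong[OF q, of "of_nat :: nat \<Rightarrow> rat"] by (simp only: of_nat_fact of_nat_mult of_nat_numeral)
  have p2: "2 * p = fact P" unfolding p_def by simp
  have pq: "p = of_nat q" using p2 fq by simp
  have ppos: "p > 0" unfolding p_def by simp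
  show "\<forall>d\<in>D. x d \<in> \<int> \<and> y d \<in> \<int> \<and> z d \<in> \<int> \<and> (x d)^3 + (y d)^3 + (z d)^3 = 3 * p^3"
  proof
    fix d assume "d \<in> D"
    then have d0: "d > 0" and dv: "d * (d+1) dvd fact P" unfolding D_def by auto
    obtain a where a: "(fact P :: nat) = d * a" using dv by (metis dvd_mult_left dvdE)
    obtain b where b: "(fact P :: nat) = (d+1) * b" using dv by (metis dvd_mult_right dvdE)
    have fa: "(fact P :: rat) = of_nat d * of_nat a"
      using arg_cong[OF a, of "of_nat :: nat \<Rightarrow> rat"] by (simp only: of_nat_fact of_nat_mult)
    have fb: "(fact P :: rat) = (of_nat d + 1) * of_nat b"
      using arg_cong[OF b, of "of_nat :: nat \<Rightarrow> rat"] by (simp only: of_nat_fact of_nat_mult of_nat_add of_nat_1)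
    have a': "2 * p / of_nat d = of_nat a"
      using d0 p2 fa by simp
    have b': "2 * p / (of_nat d + 1) = of_nat b"
      using p2 fb by (simp add: add_pos_nonneg)
    have "x d = - p - 2 * p * of_nat d - 2 * p / of_nat d" unfolding x_def by (simp add: field_simps)
    then have "x d = - of_nat q - 2 * of_nat q * of_nat d - of_nat a" using a' pq by simp
    then show "x d \<in> \<int> \<and> y d \<in> \<int> \<and> z d \<in> \<int> \<and> (x d)^3 + (y d)^3 + (z d)^3 = 3 * p^3"
    proof -
      assume xd: "x d = - of_nat q - 2 * of_nat q * of_nat d - of_nat a"
      have "y d = p + 2 * p * of_nat d + 2 * p / (of_nat d + 1)" unfolding y_def by (simp add: field_simps)
      then have yd: "y d = of_nat q + 2 * of_nat q * of_nat d + of_nat b" using b' pq by simp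
      have "z d = p + 2 * p / of_nat d + of_nat d * (2 * p / (of_nat d + 1))" unfolding z_def by (simp add: field_simps)
      then have "z d = p + of_nat a + of_nat d * of_nat b" by (simp only: a' b')
      then have zd: "z d = of_nat q + of_nat a + of_nat d * of_nat b" using pq by simp
      have "x d \<in> \<int>" unfolding xd by simp
      moreover have "y d \<in> \<int>" unfolding yd by simp
      moreover have "z d \<in> \<int>" unfolding zd by simp
      moreover have "(x d)^3 + (y d)^3 + (z d)^3 = 3 * p^3"
        unfolding x_def y_def z_def using cube_id[of "of_nat d" p] d0 by simp
      ultimately show ?thesis by blast
    qed
  qed
  have fin: "D \<subseteq> {..fact P}"
  proof
    fix d assume "d \<in> D"
    then have "d dvd fact P" unfolding D_def by (auto intro: dvd_mult_left)
    then show "d \<in> {..fact P}" by (simp add: dvd_imp_le)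
  qed
  then show "finite D" by (rule finite_subset) simp
  have xneg: "x d < 0" if "d > 0" for d
  proof -
    have "0 \<le> 2 * p * (of_nat d + 1 / of_nat d)" using ppos by simp
    then show ?thesis unfolding x_def using ppos by linarith
  qed
  have ypos: "y d > 0" for d
    unfolding y_def using ppos by (simp add: add_pos_nonneg)
  have zpos: "z d > 0" for d
    unfolding z_def using ppos by (simp add: add_pos_nonneg)
  show "inj_on (\<lambda>d. {(x d)^3, (y d)^3, (z d)^3}) D"
  proof (rule inj_onI)
    fix d1 d2 assume d1: "d1 \<in> D" and d2: "d2 \<in> D"
      and eq: "{(x d1)^3, (y d1)^3, (z d1)^3} = {(x d2)^3, (y d2)^3, (z d2)^3}"
    have p1: "d1 > 0" and p2: "d2 > 0" using d1 d2 unfolding D_def by auto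
    have c1: "(x d1)^3 < 0" using xneg[OF p1] by (simp add: power_less_zero_eq)
    have y3: "(y d2)^3 > 0" and z3: "(z d2)^3 > 0" using ypos zpos by auto
    have "(x d1)^3 \<in> {(x d2)^3, (y d2)^3, (z d2)^3}" using eq by auto
    then have "(x d1)^3 = (x d2)^3 \<or> (x d1)^3 = (y d2)^3 \<or> (x d1)^3 = (z d2)^3" by blast
    then have "(x d1)^3 = (x d2)^3" using c1 y3 z3 by linarith
    moreover have neg3: "(- a)^3 = - (a^3)" for a :: rat by (simp add: power3_eq_cube)
    ultimately have h3: "(- x d1)^3 = (- x d2)^3" by (simp only: neg3)
    have n1: "0 \<le> - x d1" using xneg[OF p1] by linarith
    have n2: "0 \<le> - x d2" using xneg[OF p2] by linarith
    have "- x d1 = - x d2" by (rule power_eq_imp_eq_base[OF h3 n1 n2]) simp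
    then have "2 * p * (of_nat d1 + 1 / of_nat d1) = 2 * p * (of_nat d2 + 1 / of_nat d2)"
      unfolding x_def by simp
    then have h: "of_nat d1 + 1 / of_nat d1 = (of_nat d2 + 1 / of_nat d2 :: rat)" using ppos by simp
    show "d1 = d2"
    proof (rule ccontr)
      assume "d1 \<noteq> d2"
      then have "d1 < d2 \<or> d2 < d1" by auto
      then show False
      proof
        assume l: "d1 < d2" show False using strict_aux[OF p1 l] h by linarith
      next
        assume l: "d2 < d1" show False using strict_aux[OF p2 l] h by linarith
      qed
    qed
  qed
  show "P \<ge> 5 \<longrightarrow> card D \<ge> P"
  proof
    assume P5: "P \<ge> 5"
    obtain e where e: "e \<ge> P" "e \<in> D"
    proof (cases "P = 5")
      case True
      have "(fact 5::nat) = 5 * 6 * 4" by (simp add: fact_numeral)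
      then have "(5::nat) * (5+1) dvd fact 5" by simp
      then show ?thesis using that[of 5] True unfolding D_def by auto
    next
      case False
      define k where "k = P div 2"
      have k2: "k \<ge> 3" using P5 False unfolding k_def by auto
      have k3: "2 * k \<le> P" unfolding k_def by auto
      have "(k*k - 1) * (k*k - 1 + 1) dvd (fact P :: nat)" using four_dvd_fact[of k P] k2 k3 by simp
      moreover have "k*k - 1 \<ge> P"
      proof -
        have "P \<le> 2*k + 1" unfolding k_def by auto
        moreover have "3 * k \<le> k * k" using k2 by simp
        ultimately show ?thesis using k2 by linarith
      qed
      moreover have "k * k - 1 > 0" using calculation(2) P5 by linarith
      ultimately show ?thesis using that[of "k*k-1"] unfolding D_def by auto
    qed
    have "{1..<P} \<subseteq> D" unfolding D_def using two_dvd_fact by auto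
    then have sub: "insert e {1..<P} \<subseteq> D" using e by auto
    have "card (insert e {1..<P}) = P" using e(1) P5 by simp
    then show "card D \<ge> P" using card_mono[OF \<open>finite D\<close> sub] by simp
  qed
qed

end
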